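(* Let $\phi:\mathcal{F}\to\mathbb{R}$ be any function, $\delta\in(0,1)$, $\epsilon_4:=2B_{\text{ref}}\sqrt{\frac{\log(\delta^{-1})}{2n}}$, and $\hat a_-(\epsilon_4):=\min_{f\in\hat{\mathcal{R}}(\epsilon_4)}\phi(f)$, $\hat a_+(\epsilon_4):=\max_{f\in\hat{\mathcal{R}}(\epsilon_4)}\phi(f)$. Let $f^\star\in\mathcal{F}$ be the unique minimizer of $e_{\text{orig}}$ over $\mathcal{F}$. If $f^\star$ satisfies $|L(f^\star,z)-L(f_{\text{ref}},z)|\le B_{\text{ref}}$ for all $z\in\mathcal{Z}$, then $$\mathbb{P}\{\phi(f^\star)\in[\hat a_-(\epsilon_4),\hat a_+(\epsilon_4)]\}\ge1-\delta.$$
   Context: Let $Z$ be a random variable on $\mathcal{Z}=\mathcal{Y}\times\mathcal{X}$; $\mathcal{F}$ a set of measurable functions $\mathcal{X}\to\mathcal{Y}$; $L:\mathcal{F}\times\mathcal{Z}\to\mathbb{R}_{\ge0}$ a nonnegative loss; data are $n\ge2$ i.i.d. copies $Z_1,\dots,Z_n$ of $Z$. $e_{\text{orig}}(f)=\mathbb{E}L(f,Z)$, $\hat e_{\text{orig}}(f)=\frac1n\sum_iL(f,Z_i)$. A reference model $f_{\text{ref}}\in\mathcal{F}$ is fixed in advance (not data dependent), and $\hat{\mathcal{R}}(\epsilon)=\{f_{\text{ref}}\}\cup\{f\in\mathcal{F}:\hat e_{\text{orig}}(f)\le\hat e_{\text{orig}}(f_{\text{ref}})+\epsilon\}$. The minima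 and maxima above are assumed to exist. *)

theory Defs
  imports "HOL-Probability.Probability"
begin

definition emp_risk ::
  "(('x \<Rightarrow> 'y) \<Rightarrow> ('y \<times> 'x) \<Rightarrow> real) \<Rightarrow> nat \<Rightarrow> (nat \<Rightarrow> 'w \<Rightarrow> 'y \<times> 'x)
     \<Rightarrow> ('x \<Rightarrow> 'y) \<Rightarrow> 'w \<Rightarrow> real" where
  "emp_risk L n Zs f w = (\<Sum>i<n. L f (Zs i w)) / real n"

definition true_risk ::
  "'w measure \<Rightarrow> (('x \<Rightarrow> 'y) \<Rightarrow> ('y \<times> 'x) \<Rightarrow> real) \<Rightarrow> ('w \<Rightarrow> 'y \<times> 'x)
     \<Rightarrow> ('x \<Rightarrow> 'y) \<Rightarrow> ennreal" where
  "true_risk M L Z f = (\<integral>\<^sup>+ w. ennreal (L f (Z w)) \<partial>M)"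

definition rashomon ::
  "('x \<Rightarrow> 'y) set \<Rightarrow> (('x \<Rightarrow> 'y) \<Rightarrow> ('y \<times> 'x) \<Rightarrow> real) \<Rightarrow> nat \<Rightarrow> (nat \<Rightarrow> 'w \<Rightarrow> 'y \<times> 'x)
     \<Rightarrow> ('x \<Rightarrow> 'y) \<Rightarrow> real \<Rightarrow> 'w \<Rightarrow> ('x \<Rightarrow> 'y) set" where
  "rashomon F L n Zs fref \<epsilon> w =
     {fref} \<union> {f \<in> F. emp_risk L n Zs f w \<le> emp_risk L n Zs fref w + \<epsilon>}"

end

theory Submission
  imports Defs
begin

lemma exponent_calc:
  fixes B \<epsilon> l :: real and n :: nat
  assumes npos: "real n > 0" and Bp: "B > 0" and l: "l \<ge> 0" and e: "\<epsilon> = 2 * B * sqrt (l / (2 * real n))"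
  shows "-2 * (real n * \<epsilon>)\<^sup>2 / (real n * (B - - B)\<^sup>2) = - l"
proof -
  have "\<epsilon>\<^sup>2 = 4 * B\<^sup>2 * (l / (2 * real n))"
    unfolding e using l npos by (simp add: power_mult_distrib)
  then have "(real n * \<epsilon>)\<^sup>2 = (real n)\<^sup>2 * (4 * B\<^sup>2 * (l / (2 * real n)))"
    by (simp add: power_mult_distrib)
  also have "\<dots> = real n * (2 * B\<^sup>2 * l)" using npos by (simp add: power2_eq_square field_simps)
  finally have "(real n * \<epsilon>)\<^sup>2 = real n * (2 * B\<^sup>2 * l)" .
  moreover have "(B - - B)\<^sup>2 = 4 * B\<^sup>2" by (simp add: power2_eq_square)
  ultimately show ?thesis using npos Bp by (simp add: field_simps)
qed

theorem proposition11:
  fixes M :: "'w measure" and S :: "('y \<times> 'x) measure"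
    and Z :: "'w \<Rightarrow> 'y \<times> 'x" and Zs :: "nat \<Rightarrow> 'w \<Rightarrow> 'y \<times> 'x"
    and F :: "('x \<Rightarrow> 'y) set" and L :: "('x \<Rightarrow> 'y) \<Rightarrow> ('y \<times> 'x) \<Rightarrow> real"
    and fref fstar :: "'x \<Rightarrow> 'y" and \<phi> :: "('x \<Rightarrow> 'y) \<Rightarrow> real"
    and \<delta> B :: real and n :: nat
  assumes M: "prob_space M"
    and Z: "Z \<in> measurable M S"
    and Zs: "\<forall>i<n. Zs i \<in> measurable M S \<and> distr M S (Zs i) = distr M S Z"
    and indep: "prob_space.indep_vars M (\<lambda>_. S) Zs {..<n}"
    and n: "n \<ge> 2"
    and L_nonneg: "\<forall>f\<in>F. \<forall>z. L f z \<ge> 0"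
    and L_meas: "\<forall>f\<in>F. L f \<in> borel_measurable S"
    and fref: "fref \<in> F"
    and \<delta>: "0 < \<delta>" "\<delta> < 1"
    and fstar: "fstar \<in> F"
    and fstar_unique_min: "\<forall>f\<in>F. f \<noteq> fstar \<longrightarrow> true_risk M L Z fstar < true_risk M L Z f"
    and bound: "\<forall>z. \<bar>L fstar z - L fref z\<bar> \<le> B"
    and min_ex: "\<forall>w\<in>space M. \<exists>f\<in>rashomon F L n Zs fref (2 * B * sqrt (ln (1 / \<delta>) / (2 * real n))) w.
                   \<forall>g\<in>rashomon F L n Zs fref (2 * B * sqrt (ln (1 / \<delta>) / (2 * real n))) w. \<phi> f \<le> \<phi> g"
    and max_ex: "\<forall>w\<in>space M. \<exists>f\<in>rashomon F L n Zs fref (2 * B * sqrt (ln (1 / \<delta>) / (2 * real n))) w.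
                   \<forall>g\<in>rashomon F L n Zs fref (2 * B * sqrt (ln (1 / \<delta>) / (2 * real n))) w. \<phi> g \<le> \<phi> f"
  shows "\<exists>A\<in>sets M.
           A \<subseteq> {w \<in> space M.
                  Inf (\<phi> ` rashomon F L n Zs fref (2 * B * sqrt (ln (1 / \<delta>) / (2 * real n))) w) \<le> \<phi> fstar \<and>
                  \<phi> fstar \<le> Sup (\<phi> ` rashomon F L n Zs fref (2 * B * sqrt (ln (1 / \<delta>) / (2 * real n))) w)}
           \<and> measure M A \<ge> 1 - \<delta>"
proof -
  interpret P: prob_space M by (rule M)
  define \<epsilon> where "\<epsilon> = 2 * B * sqrt (ln (1 / \<delta>) / (2 * real n))"
  define D where "D = (\<lambda>z. L fstar z - L fref z)"
  define X where "X = (\<lambda>i w. D (Zs i w))"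
  define Y where "Y = (\<lambda>w. D (Z w))"
  have B0: "B \<ge> 0" using bound by (meson abs_ge_zero order_trans)
  have npos: "real n > 0" using n by simp
  have Dm[measurable]: "D \<in> borel_measurable S" unfolding D_def using L_meas fstar fref by (intro borel_measurable_diff) auto
  have Zsm[measurable]: "\<And>i. i < n \<Longrightarrow> Zs i \<in> measurable M S" using Zs by auto
  have Xm[measurable]: "\<And>i. i < n \<Longrightarrow> X i \<in> borel_measurable M" unfolding X_def by measurable
  have Ym[measurable]: "Y \<in> borel_measurable M" unfolding Y_def using Z by measurable
  define bad where "bad = {w\<in>space M. (\<Sum>i\<in>{..<n}. X i w) > real n * \<epsilon>}"
  have bad_sets: "bad \<in> sets M" unfolding bad_def by measurable
  define A where "A = space M - bad"
  have A_sets: "A \<in> sets M" unfolding A_def using bad_sets by auto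
  have mu: "P.expectation Y \<le> 0"
  proof (cases "fref = fstar")
    case True
    then show ?thesis unfolding Y_def D_def by simp
  next
    case False
    have lt: "true_risk M L Z fstar < true_risk M L Z fref" using fstar_unique_min fref False by auto
    have mS: "L fstar \<in> borel_measurable S" "L fref \<in> borel_measurable S" using L_meas fstar fref by auto
    have m1[measurable]: "(\<lambda>w. L fstar (Z w)) \<in> borel_measurable M" using mS(1) Z by measurable
    have m2[measurable]: "(\<lambda>w. L fref (Z w)) \<in> borel_measurable M" using mS(2) Z by measurable
    have fin1: "true_risk M L Z fstar < \<infinity>" using lt top.not_eq_extremum by fastforce
    have nn1: "\<And>w. L fstar (Z w) \<ge> 0" using L_nonneg fstar by blast
    have nn2: "\<And>w. L fref (Z w) \<ge> 0" using L_nonneg fref by blast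
    have int1: "integrable M (\<lambda>w. L fstar (Z w))"
      using fin1 nn1 unfolding true_risk_def
      by (intro integrableI_nonneg) (auto simp: less_top intro!: AE_I2)
    have int2: "integrable M (\<lambda>w. L fref (Z w))"
    proof (rule Bochner_Integration.integrable_bound[OF _ _ ])
      show "integrable M (\<lambda>w. L fstar (Z w) + B)" using int1 by auto
      show "(\<lambda>w. L fref (Z w)) \<in> borel_measurable M" by measurable
      show "AE w in M. norm (L fref (Z w)) \<le> norm (L fstar (Z w) + B)"
      proof (intro AE_I2)
        fix w have "\<bar>L fstar (Z w) - L fref (Z w)\<bar> \<le> B" using bound by blast
        then show "norm (L fref (Z w)) \<le> norm (L fstar (Z w) + B)" using nn1[of w] nn2[of w] B0 by auto
      qed
    qed
    have e1: "true_risk M L Z fstar = ennreal (P.expectation (\<lambda>w. L fstar (Z w)))"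
      unfolding true_risk_def using int1 nn1
      by (intro nn_integral_eq_integral) auto
    have e2: "true_risk M L Z fref = ennreal (P.expectation (\<lambda>w. L fref (Z w)))"
      unfolding true_risk_def using int2 nn2
      by (intro nn_integral_eq_integral) auto
    have "P.expectation (\<lambda>w. L fstar (Z w)) \<le> P.expectation (\<lambda>w. L fref (Z w))"
    proof -
      have "0 \<le> P.expectation (\<lambda>w. L fstar (Z w))" using nn1 by simp
      then show ?thesis using lt e1 e2 ennreal_less_iff by auto
    qed
    moreover have "P.expectation Y = P.expectation (\<lambda>w. L fstar (Z w)) - P.expectation (\<lambda>w. L fref (Z w))"
      unfolding Y_def D_def using int1 int2 by simp
    ultimately show ?thesis by simp
  qed
  have good: "\<And>w. w \<in> A \<Longrightarrow> fstar \<in> rashomon F L n Zs fref \<epsilon> w"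
  proof -
    fix w assume w: "w \<in> A"
    then have "(\<Sum>i\<in>{..<n}. X i w) \<le> real n * \<epsilon>"
      unfolding A_def bad_def by auto
    then have "(\<Sum>i<n. L fstar (Zs i w)) - (\<Sum>i<n. L fref (Zs i w)) \<le> real n * \<epsilon>"
      unfolding X_def D_def by (simp add: sum_subtractf)
    then have "(\<Sum>i<n. L fstar (Zs i w)) / real n \<le> (\<Sum>i<n. L fref (Zs i w)) / real n + \<epsilon>"
      using npos by (simp add: field_simps)
    then show "fstar \<in> rashomon F L n Zs fref \<epsilon> w"
      unfolding rashomon_def emp_risk_def using fstar by auto
  qed
  have sub: "A \<subseteq> {w \<in> space M.
                  Inf (\<phi> ` rashomon F L n Zs fref \<epsilon> w) \<le> \<phi> fstar \<and>
                  \<phi> fstar \<le> Sup (\<phi> ` rashomon F L n Zs fref \<epsilon> w)}"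
  proof
    fix w assume w: "w \<in> A"
    then have ws: "w \<in> space M" unfolding A_def by auto
    have mem: "fstar \<in> rashomon F L n Zs fref \<epsilon> w" using good w .
    obtain f0 where f0: "\<forall>g\<in>rashomon F L n Zs fref \<epsilon> w. \<phi> f0 \<le> \<phi> g"
      using min_ex ws unfolding \<epsilon>_def by blast
    obtain f1 where f1: "\<forall>g\<in>rashomon F L n Zs fref \<epsilon> w. \<phi> g \<le> \<phi> f1"
      using max_ex ws unfolding \<epsilon>_def by blast
    have "bdd_below (\<phi> ` rashomon F L n Zs fref \<epsilon> w)" using f0 by (auto intro!: bdd_belowI)
    moreover have "bdd_above (\<phi> ` rashomon F L n Zs fref \<epsilon> w)" using f1 by (auto intro!: bdd_aboveI)
    ultimately show "w \<in> {w \<in> space M.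
                  Inf (\<phi> ` rashomon F L n Zs fref \<epsilon> w) \<le> \<phi> fstar \<and>
                  \<phi> fstar \<le> Sup (\<phi> ` rashomon F L n Zs fref \<epsilon> w)}"
      using mem ws by (auto intro!: cInf_lower cSup_upper)
  qed
  have probbad: "P.prob bad \<le> \<delta>"
  proof (cases "B = 0")
    case True
    have "\<And>z. D z = 0" unfolding D_def using bound True by (metis abs_le_zero_iff eq_iff_diff_eq_0)
    then have "bad = {}"
      unfolding bad_def X_def \<epsilon>_def True by simp
    then show ?thesis using \<delta> by simp
  next
    case False
    then have Bp: "B > 0" using B0 by simp
    interpret H: Hoeffding_ineq_iid M "{..<n}" X Y "-B" B "P.expectation Y"
    proof unfold_locales
      show "finite {..<n}" by simp
      have "P.indep_vars (\<lambda>_. borel) (\<lambda>i w. D (Zs i w)) {..<n}"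
        by (rule P.indep_vars_compose2[OF indep]) measurable
      then show "P.indep_vars (\<lambda>_. borel) X {..<n}" unfolding X_def .
      fix i assume i: "i \<in> {..<n}"
      have "distr M borel (X i) = distr (distr M S (Zs i)) borel D"
        unfolding X_def using i by (subst distr_distr) (auto simp: comp_def)
      also have "\<dots> = distr (distr M S Z) borel D" using Zs i by simp
      also have "\<dots> = distr M borel Y"
        unfolding Y_def using Z by (subst distr_distr) (auto simp: comp_def)
      finally show "distr M borel (X i) = distr M borel Y" .
    next
      show "Y \<in> borel_measurable M" by measurable
      show "AE x in M. Y x \<in> {- B..B}"
        proof (intro AE_I2)
        fix x have "\<bar>L fstar (Z x) - L fref (Z x)\<bar> \<le> B" using bound by blast
        then show "Y x \<in> {- B..B}" unfolding Y_def D_def by (simp add: abs_le_iff)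
      qed
    qed
    have "ln (1 / \<delta>) \<ge> 0" using \<delta> by simp
    then have eps0: "real n * \<epsilon> \<ge> 0" unfolding \<epsilon>_def using B0 npos by simp
    have "bad \<subseteq> {x\<in>space M. (\<Sum>i\<in>{..<n}. X i x) \<ge> real (card {..<n::nat}) * P.expectation Y + real n * \<epsilon>}"
    proof
      fix x assume "x \<in> bad"
      moreover have "real n * P.expectation Y \<le> 0" using mu npos by (simp add: mult_nonneg_nonpos)
      ultimately show "x \<in> {x\<in>space M. (\<Sum>i\<in>{..<n}. X i x) \<ge> real (card {..<n::nat}) * P.expectation Y + real n * \<epsilon>}"
        unfolding bad_def by auto
    qed
    then have "P.prob bad \<le> P.prob {x\<in>space M. (\<Sum>i\<in>{..<n}. X i x) \<ge> real (card {..<n::nat}) * P.expectation Y + real n * \<epsilon>}"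
      by (intro P.finite_measure_mono) measurable
    also have "\<dots> \<le> exp (-2 * (real n * \<epsilon>)\<^sup>2 / (real n * (B - - B)\<^sup>2))"
    proof -
      have "{..<n} \<noteq> {}" using n lessThan_empty_iff by (metis not_numeral_le_zero)
      then show ?thesis using H.Hoeffding_ineq_ge[OF eps0] Bp by simp
    qed
    also have "-2 * (real n * \<epsilon>)\<^sup>2 / (real n * (B - - B)\<^sup>2) = - ln (1 / \<delta>)"
      by (rule exponent_calc[OF npos Bp]) (use \<delta> in \<open>simp_all add: \<epsilon>_def\<close>)
    also have "exp (- ln (1 / \<delta>)) = \<delta>" using \<delta> by (simp add: exp_minus ln_div)
    finally show ?thesis .
  qed
  have "P.prob A = 1 - P.prob bad" unfolding A_def using bad_sets by (simp add: P.prob_compl)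
  then have "P.prob A \<ge> 1 - \<delta>" using probbad by simp
  then show ?thesis using A_sets sub unfolding \<epsilon>_def by blast
qed

end
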